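(* In any unit-weight graph with $\mathsf{OPT}<\mathsf{OPT}^{\mathsf{stable}}$, there exists a binary signaling scheme that is persuasive and has cost strictly lower than $\mathsf{OPT}^{\mathsf{stable}}$.
   Context: Setting. $V$ is a finite set of $n$ task types and $W=(W_{u,v})_{u,v\in V}$ is a symmetric matrix with entries in $\{0,1\}$ and $W_{v,v}=1$ for all $v$ (a unit-weight graph $G=(V,E)$ with $E=\{\{u,v\}:u\ne v,W_{u,v}=1\}$). A vector $\theta\in\mathbb{R}_{\ge0}^V$ is feasible if $W\theta\ge\mathbf 1$ coordinatewise, and stable if it is feasible and for every $v$, $\theta_v=\min\{x\ge0: x+\sum_{v'\neq v}W_{v,v'}\theta_{v'}\ge1\}$. $\mathsf{OPT}=\min\{\|\theta\|_1:\theta\ge0\text{ feasible}\}$ and $\mathsf{OPT}^{\mathsf{stable}}=\min\{\|\theta\|_1:\theta\text{ stable}\}$. Signaling. There are $n$ agents; the type profile $t=(t_1,\dots,t_n)$ is a uniformly random bijection $[n]\to V$. A signaling scheme with finite signal space $\Sigma\subset[0,1]$ is a map $\varphi$ assigning to each bijection $t$ a distribution $\varphi(t)$ on $\Sigma^V$; given $t$, $s\sim\varphi(t)$ is drawn and agent $i$ privately receives $s_{t_i}$. For agent $i$, a signal $\theta\in\Sigma$ with $\Pr[s_{t_i}=\theta]>0$ and $x\ge0$, let $Q_i(x\mid\theta)=\mathbb{E}\big[x+\sum_{v'\neq t_i}W_{t_i,v'}s_{v'}\,\big|\,s_{t_i}=\theta\big]$. The scheme is persuasive if for every agent $i$ and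 every such $\theta$: $Q_i(\theta\mid\theta)\ge1$ and $\theta=\min\{x\ge0:Q_i(x\mid\theta)\ge1\}$. Its cost is $\mathbb{E}[\|s\|_1]$. Binary means $|\Sigma|=2$. *)

theory Defs
  imports "HOL-Probability.Probability"
begin

text \<open>Task types form a finite type 'v; W is the weight matrix. Agents form a finite
  type 'a with as many elements as 'v (agents [n], n = |V|).\<close>

definition unit_weight :: "('v::finite \<Rightarrow> 'v \<Rightarrow> real) \<Rightarrow> bool" where
  "unit_weight W \<longleftrightarrow> (\<forall>u v. W u v \<in> {0, 1}) \<and> (\<forall>u v. W u v = W v u) \<and> (\<forall>v. W v v = 1)"

definition feasible :: "('v::finite \<Rightarrow> 'v \<Rightarrow> real) \<Rightarrow> ('v \<Rightarrow> real) \<Rightarrow> bool" where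
  "feasible W \<theta> \<longleftrightarrow> (\<forall>v. \<theta> v \<ge> 0) \<and> (\<forall>v. (\<Sum>u\<in>UNIV. W v u * \<theta> u) \<ge> 1)"

definition stable :: "('v::finite \<Rightarrow> 'v \<Rightarrow> real) \<Rightarrow> ('v \<Rightarrow> real) \<Rightarrow> bool" where
  "stable W \<theta> \<longleftrightarrow> feasible W \<theta> \<and>
     (\<forall>v. \<theta> v = (LEAST x::real. x \<ge> 0 \<and> x + (\<Sum>u\<in>UNIV - {v}. W v u * \<theta> u) \<ge> 1))"

definition l1norm :: "('v::finite \<Rightarrow> real) \<Rightarrow> real" where
  "l1norm \<theta> = (\<Sum>v\<in>UNIV. \<bar>\<theta> v\<bar>)"

definition OPT :: "('v::finite \<Rightarrow> 'v \<Rightarrow> real) \<Rightarrow> real" where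
  "OPT W = Inf (l1norm ` {\<theta>. feasible W \<theta>})"

definition OPT_stable :: "('v::finite \<Rightarrow> 'v \<Rightarrow> real) \<Rightarrow> real" where
  "OPT_stable W = Inf (l1norm ` {\<theta>. stable W \<theta>})"

text \<open>A signaling scheme with finite signal space Sig \<subseteq> [0,1]: to each type profile
  (bijection agents \<rightarrow> types) a distribution on signal vectors Sig^V.\<close>

definition signaling_scheme ::
  "real set \<Rightarrow> (('a::finite \<Rightarrow> 'v::finite) \<Rightarrow> ('v \<Rightarrow> real) pmf) \<Rightarrow> bool" where
  "signaling_scheme Sig \<phi> \<longleftrightarrow> finite Sig \<and> Sig \<subseteq> {0..1} \<and>
     (\<forall>t. bij t \<longrightarrow> set_pmf (\<phi> t) \<subseteq> {s. \<forall>v. s v \<in> Sig})"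

definition joint :: "(('a::finite \<Rightarrow> 'v::finite) \<Rightarrow> ('v \<Rightarrow> real) pmf) \<Rightarrow> (('a \<Rightarrow> 'v) \<times> ('v \<Rightarrow> real)) pmf" where
  "joint \<phi> = bind_pmf (pmf_of_set {t. bij t}) (\<lambda>t. map_pmf (\<lambda>s. (t, s)) (\<phi> t))"

definition Q :: "('v::finite \<Rightarrow> 'v \<Rightarrow> real) \<Rightarrow> (('a::finite \<Rightarrow> 'v) \<Rightarrow> ('v \<Rightarrow> real) pmf)
    \<Rightarrow> 'a \<Rightarrow> real \<Rightarrow> real \<Rightarrow> real" where
  "Q W \<phi> i \<theta> x = measure_pmf.expectation (cond_pmf (joint \<phi>) {(t, s). s (t i) = \<theta>})
      (\<lambda>(t, s). x + (\<Sum>v'\<in>UNIV - {t i}. W (t i) v' * s v'))"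

definition persuasive :: "('v::finite \<Rightarrow> 'v \<Rightarrow> real) \<Rightarrow> (('a::finite \<Rightarrow> 'v) \<Rightarrow> ('v \<Rightarrow> real) pmf) \<Rightarrow> bool" where
  "persuasive W \<phi> \<longleftrightarrow> (\<forall>i \<theta>. measure_pmf.prob (joint \<phi>) {(t, s). s (t i) = \<theta>} > 0 \<longrightarrow>
      Q W \<phi> i \<theta> \<theta> \<ge> 1 \<and> \<theta> = (LEAST x::real. x \<ge> 0 \<and> Q W \<phi> i \<theta> x \<ge> 1))"

definition cost :: "(('a::finite \<Rightarrow> 'v::finite) \<Rightarrow> ('v \<Rightarrow> real) pmf) \<Rightarrow> real" where
  "cost \<phi> = measure_pmf.expectation (joint \<phi>) (\<lambda>(t, s). l1norm s)"

end

theory Submission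
  imports Defs
begin

lemma least_eq: "(LEAST x::real. x \<ge> 0 \<and> x + c \<ge> 1) = max 0 (1 - c)"
  by (rule Least_equality) auto

definition indep :: "('v \<Rightarrow> 'v \<Rightarrow> real) \<Rightarrow> 'v set \<Rightarrow> bool" where
  "indep W S \<longleftrightarrow> (\<forall>u\<in>S. \<forall>v\<in>S. u \<noteq> v \<longrightarrow> W u v = 0)"

lemma stab_pmf:
  fixes W :: "'v::finite \<Rightarrow> 'v \<Rightarrow> real" and \<theta> :: "'v \<Rightarrow> real"
  assumes W01: "\<forall>u v. W u v \<in> {0,1}" and sym: "\<forall>u v. W u v = W v u"
    and nonneg: "\<forall>v. \<theta> v \<ge> 0"
    and loc: "\<forall>v. \<theta> v > 0 \<longrightarrow> \<theta> v + (\<Sum>u\<in>UNIV-{v}. W v u * \<theta> u) \<le> 1"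
    and "finite F"
  shows "\<exists>D::'v set pmf. (\<forall>S\<in>set_pmf D. S \<subseteq> F \<and> indep W S) \<and>
            (\<forall>v\<in>F. measure_pmf.prob D {S. v \<in> S} = \<theta> v)"
  using \<open>finite F\<close>
proof (induction F rule: finite_induct)
  case empty
  show ?case by (intro exI[of _ "return_pmf {}"]) (auto simp: indep_def)
next
  case (insert a F)
  then obtain D where Dsupp: "\<forall>S\<in>set_pmf D. S \<subseteq> F \<and> indep W S"
    and Dm: "\<forall>v\<in>F. measure_pmf.prob D {S. v \<in> S} = \<theta> v" by blast
  have aS: "a \<notin> S" if "S \<in> set_pmf D" for S using Dsupp that insert(2) by blast
  show ?case
  proof (cases "\<theta> a = 0")
    case True
    have "measure_pmf.prob D {S. a \<in> S} = 0"
      using aS by (subst measure_pmf_zero_iff) auto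
    then show ?thesis using Dsupp Dm True
      by (intro exI[of _ D]) auto
  next
    case False
    hence pos: "\<theta> a > 0" using nonneg by (simp add: order_less_le)
    define E where "E = {S. \<forall>u\<in>F. W a u \<noteq> 0 \<longrightarrow> u \<notin> S}"
    define p where "p = measure_pmf.prob D E"
    define N where "N = {u\<in>F. W a u \<noteq> 0}"
    have comp: "UNIV - E = (\<Union>u\<in>N. {S. u \<in> S})" by (auto simp: E_def N_def)
    have "measure_pmf.prob D (UNIV - E) \<le> (\<Sum>u\<in>N. measure_pmf.prob D {S. u \<in> S})"
      unfolding comp using insert(1) 
      by (intro measure_pmf.finite_measure_subadditive_finite) (auto simp: N_def)
    also have "\<dots> = (\<Sum>u\<in>N. W a u * \<theta> u)"
      using Dm W01 by (intro sum.cong) (auto simp: N_def)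
    also have "\<dots> \<le> (\<Sum>u\<in>UNIV-{a}. W a u * \<theta> u)"
      using insert(2) W01 nonneg by (intro sum_mono2) (auto simp: N_def intro!: mult_nonneg_nonneg, metis order_refl zero_le_one)
    also have "\<dots> \<le> 1 - \<theta> a" using loc pos by fastforce
    finally have "measure_pmf.prob D (UNIV - E) \<le> 1 - \<theta> a" .
    hence pge: "p \<ge> \<theta> a" unfolding p_def
      using measure_pmf.prob_compl[of E D] by simp
    define q where "q = \<theta> a / p"
    have q01: "0 \<le> q" "q \<le> 1" using pge pos by (auto simp: q_def)
    define f where "f = (\<lambda>S. if S \<in> E then map_pmf (\<lambda>b. if b then insert a S else S) (bernoulli_pmf q) else return_pmf S)"
    define D' where "D' = bind_pmf D f"
    have supp: "\<forall>S\<in>set_pmf D'. S \<subseteq> insert a F \<and> indep W S"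
    proof
      fix S' assume "S' \<in> set_pmf D'"
      then obtain S where S: "S \<in> set_pmf D" "S' \<in> set_pmf (f S)" by (auto simp: D'_def)
      show "S' \<subseteq> insert a F \<and> indep W S'"
      proof (cases "S \<in> E")
        case True
        then have "S' = S \<or> S' = insert a S" using S(2) by (auto simp: f_def split: if_splits)
        moreover have "indep W (insert a S)"
        proof -
          have "W a u = 0" if "u \<in> S" for u using True that Dsupp S(1) W01 by (auto simp: E_def)
          then show ?thesis using Dsupp S(1) sym unfolding indep_def by auto
        qed
        ultimately show ?thesis using Dsupp S(1) by auto
      next
        case False
        then show ?thesis using S Dsupp by (auto simp: f_def)
      qed
    qed
    have mapD: "map_pmf (\<lambda>S. S - {a}) D' = D"
    proof -
      have "map_pmf (\<lambda>S. S - {a}) D' = bind_pmf D (\<lambda>S. map_pmf (\<lambda>S. S - {a}) (f S))"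
        by (simp add: D'_def map_bind_pmf)
      also have "\<dots> = bind_pmf D return_pmf"
      proof (intro bind_pmf_cong refl)
        fix S assume "S \<in> set_pmf D"
        then have "a \<notin> S" by (rule aS)
        then have "(\<lambda>x. (if x then insert a S else S) - {a}) = (\<lambda>_. S)" by (intro ext) auto
        then show "map_pmf (\<lambda>S. S - {a}) (f S) = return_pmf S"
          using \<open>a \<notin> S\<close> by (auto simp: f_def pmf.map_comp o_def map_pmf_const)
      qed
      also have "\<dots> = D" by (rule bind_return_pmf')
      finally show ?thesis .
    qed
    have margF: "measure_pmf.prob D' {S. v \<in> S} = \<theta> v" if "v \<in> F" for v
    proof -
      have "v \<noteq> a" using that insert(2) by auto
      then have "{S. v \<in> S} = (\<lambda>S. S - {a}) -` {S. v \<in> S}" by auto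
      then have "measure_pmf.prob D' {S. v \<in> S} = measure_pmf.prob (map_pmf (\<lambda>S. S - {a}) D') {S. v \<in> S}"
        by simp
      then show ?thesis using mapD Dm that by simp
    qed
    have mapa: "map_pmf (\<lambda>S. a \<in> S) D' = bind_pmf D (\<lambda>S. if S \<in> E then bernoulli_pmf q else return_pmf False)"
    proof -
      have "map_pmf (\<lambda>S. a \<in> S) D' = bind_pmf D (\<lambda>S. map_pmf (\<lambda>S. a \<in> S) (f S))"
        by (simp add: D'_def map_bind_pmf)
      also have "\<dots> = bind_pmf D (\<lambda>S. if S \<in> E then bernoulli_pmf q else return_pmf False)"
      proof (intro bind_pmf_cong refl)
        fix S assume "S \<in> set_pmf D"
        then have "a \<notin> S" by (rule aS)
        then show "map_pmf (\<lambda>S. a \<in> S) (f S) = (if S \<in> E then bernoulli_pmf q else return_pmf False)"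
          by (auto simp: f_def pmf.map_comp o_def)
      qed
      finally show ?thesis .
    qed
    have "measure_pmf.prob D' {S. a \<in> S} = pmf (map_pmf (\<lambda>S. a \<in> S) D') True"
      by (simp add: pmf_map vimage_def)
    also have "\<dots> = (\<integral>S. (if S \<in> E then q else 0) \<partial>measure_pmf D)"
      unfolding mapa pmf_bind using q01 by (intro Bochner_Integration.integral_cong) auto
    also have "\<dots> = (\<integral>S. q * indicator E S \<partial>measure_pmf D)"
      by (intro Bochner_Integration.integral_cong) (auto simp: indicator_def)
    also have "\<dots> = q * p" by (simp add: p_def)
    also have "\<dots> = \<theta> a" using pge pos by (simp add: q_def)
    finally have marga: "measure_pmf.prob D' {S. a \<in> S} = \<theta> a" .
    show ?thesis using supp margF marga by (intro exI[of _ D']) auto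
  qed
qed

lemma exp_const_supp:
  fixes M :: "'b pmf"
  assumes "\<And>z. z \<in> set_pmf M \<Longrightarrow> f z = (c::real)"
  shows "measure_pmf.expectation M f = c"
proof -
  have "measure_pmf.expectation M f = measure_pmf.expectation M (\<lambda>_. c)"
    using assms by (intro integral_cong_AE) (auto simp: AE_measure_pmf_iff)
  then show ?thesis by simp
qed

lemma exp_sum:
  fixes M :: "'b pmf"
  assumes "finite A" "set_pmf M \<subseteq> A"
  shows "measure_pmf.expectation M f = (\<Sum>z\<in>A. f z * pmf M z)"
  using assms by (intro integral_measure_pmf_real) auto

lemma exp_cond:
  fixes p :: "'b pmf"
  assumes ne: "set_pmf p \<inter> A \<noteq> {}" and fin: "finite (set_pmf p)"
  shows "measure_pmf.expectation (cond_pmf p A) f =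
     measure_pmf.expectation p (\<lambda>z. indicator A z * f z) / measure_pmf.prob p A"
proof -
  have "measure_pmf.expectation (cond_pmf p A) f = (\<Sum>z\<in>set_pmf p. f z * pmf (cond_pmf p A) z)"
    using fin ne by (intro exp_sum) auto
  also have "\<dots> = (\<Sum>z\<in>set_pmf p. indicator A z * f z * pmf p z / measure_pmf.prob p A)"
    using ne by (intro sum.cong) (auto simp: pmf_cond indicator_def)
  also have "\<dots> = (\<Sum>z\<in>set_pmf p. indicator A z * f z * pmf p z) / measure_pmf.prob p A"
    by (simp add: sum_divide_distrib)
  also have "(\<Sum>z\<in>set_pmf p. indicator A z * f z * pmf p z) = measure_pmf.expectation p (\<lambda>z. indicator A z * f z)"
    using fin by (intro exp_sum[symmetric]) auto
  finally show ?thesis .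
qed

lemma card_fiber_eq:
  fixes i :: "'a::finite"
  shows "card {t::'a \<Rightarrow> 'v. bij t \<and> t i = v} = card {t::'a \<Rightarrow> 'v. bij t \<and> t i = w}"
proof -
  define \<sigma> where "\<sigma> = (\<lambda>x. if x = v then w else if x = w then v else x)"
  have inv: "\<sigma> (\<sigma> x) = x" for x by (auto simp: \<sigma>_def)
  have bs: "bij \<sigma>" by (metis inv bij_betw_byWitness[of UNIV \<sigma> \<sigma> UNIV] UNIV_I image_subsetI subset_UNIV)
  show ?thesis
  proof (rule bij_betw_same_card[of "\<lambda>t. \<sigma> \<circ> t"], rule bij_betw_byWitness[of _ "\<lambda>t. \<sigma> \<circ> t"])
    show "\<forall>t\<in>{t. bij t \<and> t i = v}. \<sigma> \<circ> (\<sigma> \<circ> t) = t" by (auto simp: o_def inv)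
    show "\<forall>t\<in>{t. bij t \<and> t i = w}. \<sigma> \<circ> (\<sigma> \<circ> t) = t" by (auto simp: o_def inv)
    show "(\<circ>) \<sigma> ` {t. bij t \<and> t i = v} \<subseteq> {t. bij t \<and> t i = w}"
      using bs by (auto simp: \<sigma>_def intro: bij_comp)
    show "(\<circ>) \<sigma> ` {t. bij t \<and> t i = w} \<subseteq> {t. bij t \<and> t i = v}"
      using bs by (auto simp: \<sigma>_def intro: bij_comp)
  qed
qed

lemma sum_bij_uniform:
  fixes i :: "'a::finite" and H :: "'v::finite \<Rightarrow> real"
  assumes "(\<Sum>v\<in>UNIV. H v) \<ge> 0"
  shows "(\<Sum>t\<in>{t::'a\<Rightarrow>'v. bij t}. H (t i)) \<ge> 0"
proof -
  obtain v0 :: 'v where True by simp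
  define K where "K = card {t::'a \<Rightarrow> 'v. bij t \<and> t i = v0}"
  have "(\<Sum>t\<in>{t::'a\<Rightarrow>'v. bij t}. H (t i)) = (\<Sum>t\<in>{t::'a\<Rightarrow>'v. bij t}. \<Sum>v\<in>UNIV. if t i = v then H v else 0)"
    by (intro sum.cong) auto
  also have "\<dots> = (\<Sum>v\<in>UNIV. \<Sum>t\<in>{t::'a\<Rightarrow>'v. bij t}. if t i = v then H v else 0)"
    by (rule sum.swap)
  also have "\<dots> = (\<Sum>v\<in>UNIV. H v * K)"
  proof (intro sum.cong refl)
    fix v
    have "(\<Sum>t\<in>{t::'a\<Rightarrow>'v. bij t}. if t i = v then H v else 0) = (\<Sum>t\<in>{t\<in>{t::'a\<Rightarrow>'v. bij t}. t i = v}. H v)"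
      by (rule sum.inter_filter[symmetric]) simp
    also have "\<dots> = H v * card {t::'a \<Rightarrow> 'v. bij t \<and> t i = v}" by (simp add: mult.commute)
    also have "\<dots> = H v * K" unfolding K_def by (subst card_fiber_eq[of i v v0]) simp
    finally show "(\<Sum>t\<in>{t::'a\<Rightarrow>'v. bij t}. if t i = v then H v else 0) = H v * K" .
  qed
  also have "\<dots> = (\<Sum>v\<in>UNIV. H v) * K" by (simp add: sum_distrib_right)
  also have "\<dots> \<ge> 0" using assms by simp
  finally show ?thesis .
qed

lemma scheme:
  fixes W :: "'v::finite \<Rightarrow> 'v \<Rightarrow> real" and D :: "'v set pmf" and x :: "'v \<Rightarrow> real"
  assumes card: "CARD('a::finite) = CARD('v)" and uw: "unit_weight W"
    and Dind: "\<forall>S\<in>set_pmf D. indep W S"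
    and Dm: "\<forall>v. measure_pmf.prob D {S. v \<in> S} = x v"
    and bal: "(\<Sum>v\<in>UNIV. \<Sum>u\<in>UNIV. W v u * x u) \<ge> real CARD('v)"
  shows "\<exists>\<phi>::('a \<Rightarrow> 'v) \<Rightarrow> ('v \<Rightarrow> real) pmf. signaling_scheme {0,1} \<phi> \<and> persuasive W \<phi> \<and> cost \<phi> = (\<Sum>v\<in>UNIV. x v)"
proof -
  have W01: "\<forall>u v. W u v \<in> {0,1}" and Wsym: "\<forall>u v. W u v = W v u" and Wd: "\<forall>v. W v v = 1"
    using uw by (auto simp: unit_weight_def)
  define ind where "ind = (\<lambda>S::'v set. \<lambda>v. if v \<in> S then (1::real) else 0)"
  define \<mu> where "\<mu> = map_pmf ind D"
  define \<phi> where "\<phi> = (\<lambda>t::'a\<Rightarrow>'v. \<mu>)"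
  define B where "B = {t::'a\<Rightarrow>'v. bij t}"
  define P where "P = pmf_of_set B"
  have finB: "finite B" by simp
  obtain h :: "'a \<Rightarrow> 'v" where "bij_betw h UNIV UNIV"
    using finite_same_card_bij[of "UNIV::'a set" "UNIV::'v set"] card by auto
  then have Bne: "B \<noteq> {}" by (auto simp: B_def)
  have setP: "set_pmf P = B" using finB Bne by (simp add: P_def)
  have pmfP: "pmf P t = indicator B t / card B" for t using finB Bne by (simp add: P_def)
  have jointeq: "joint \<phi> = pair_pmf P \<mu>"
    by (simp add: joint_def \<phi>_def P_def B_def pair_pmf_def map_pmf_def)
  have jointeq2: "joint \<phi> = map_pmf (\<lambda>(t,S). (t, ind S)) (pair_pmf P D)"
    unfolding jointeq \<mu>_def pair_map_pmf2 by (simp add: apsnd_def map_prod_def)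
  have finJ: "finite (set_pmf (joint \<phi>))"
    by (simp add: jointeq2)
  have suppJ: "\<exists>S. S \<in> set_pmf D \<and> s = ind S \<and> t \<in> B" if "(t,s) \<in> set_pmf (joint \<phi>)" for t s
    using that setP by (auto simp: jointeq \<mu>_def)
  have marg: "(\<Sum>S\<in>UNIV. ind S v * pmf D S) = x v" for v
  proof -
    have "(\<Sum>S\<in>UNIV. ind S v * pmf D S) = (\<Sum>S\<in>UNIV. if v \<in> S then pmf D S else 0)"
      by (intro sum.cong) (auto simp: ind_def)
    also have "\<dots> = sum (pmf D) {S. v \<in> S}"
      using sum.inter_filter[of UNIV "pmf D" "\<lambda>S. v \<in> S"] by simp
    also have "\<dots> = x v" using Dm by (simp add: measure_measure_pmf_finite[symmetric])
    finally show ?thesis .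
  qed
  have sig: "signaling_scheme {0,1} \<phi>"
    unfolding signaling_scheme_def \<phi>_def \<mu>_def ind_def by auto
  have "cost \<phi> = measure_pmf.expectation (pair_pmf P \<mu>) (\<lambda>z. l1norm (snd z))"
  proof -
    have "(\<lambda>(t::'a\<Rightarrow>'v, s::'v\<Rightarrow>real). l1norm s) = (\<lambda>z. l1norm (snd z))" by auto
    then show ?thesis unfolding cost_def jointeq by simp
  qed
  also have "\<dots> = measure_pmf.expectation \<mu> l1norm" by (rule expectation_pair_pmf_snd)
  also have "\<dots> = measure_pmf.expectation D (\<lambda>S. l1norm (ind S))" by (simp add: \<mu>_def)
  also have "\<dots> = (\<Sum>S\<in>UNIV. l1norm (ind S) * pmf D S)" by (rule exp_sum) auto
  also have "\<dots> = (\<Sum>S\<in>UNIV. \<Sum>v\<in>UNIV. ind S v * pmf D S)"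
    by (simp add: l1norm_def sum_distrib_right) (simp add: ind_def)
  also have "\<dots> = (\<Sum>v\<in>UNIV. \<Sum>S\<in>UNIV. ind S v * pmf D S)" by (rule sum.swap)
  also have "\<dots> = (\<Sum>v\<in>UNIV. x v)" using marg by simp
  finally have costeq: "cost \<phi> = (\<Sum>v\<in>UNIV. x v)" .
  have pers: "persuasive W \<phi>"
    unfolding persuasive_def
  proof (intro allI impI)
    fix i :: 'a and \<theta>' :: real
    define A where "A = {(t::'a\<Rightarrow>'v, s::'v\<Rightarrow>real). s (t i) = \<theta>'}"
    assume pos: "measure_pmf.prob (joint \<phi>) {(t, s). s (t i) = \<theta>'} > 0"
    then have posA: "measure_pmf.prob (joint \<phi>) A > 0" by (simp add: A_def)
    have ne: "set_pmf (joint \<phi>) \<inter> A \<noteq> {}" using posA measure_pmf_zero_iff[of "joint \<phi>" A] by linarith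
    define g where "g = (\<lambda>z::('a\<Rightarrow>'v)\<times>('v\<Rightarrow>real). \<Sum>v'\<in>UNIV - {fst z i}. W (fst z i) v' * snd z v')"
    define C where "C = measure_pmf.expectation (cond_pmf (joint \<phi>) A) g"
    have finC: "finite (set_pmf (cond_pmf (joint \<phi>) A))"
      using set_cond_pmf[OF ne] finJ by (metis finite_Int)
    have Qeq: "Q W \<phi> i \<theta>' y = y + C" for y
    proof -
      have fe: "(\<lambda>(t::'a\<Rightarrow>'v, s::'v\<Rightarrow>real). y + (\<Sum>v'\<in>UNIV - {t i}. W (t i) v' * s v')) = (\<lambda>z. y + g z)"
        by (auto simp: g_def fun_eq_iff)
      have "Q W \<phi> i \<theta>' y = measure_pmf.expectation (cond_pmf (joint \<phi>) A) (\<lambda>z. y + g z)"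
        unfolding Q_def A_def fe ..
      also have "\<dots> = measure_pmf.expectation (cond_pmf (joint \<phi>) A) (\<lambda>z. y) + C" unfolding C_def
        by (rule Bochner_Integration.integral_add) (use finC in \<open>auto intro: integrable_measure_pmf_finite\<close>)
      also have "\<dots> = y + C" by simp
      finally show ?thesis .
    qed
    obtain t s where ts: "(t,s) \<in> set_pmf (joint \<phi>)" "s (t i) = \<theta>'" using ne by (auto simp: A_def)
    then obtain S where "s = ind S" using suppJ by blast
    then have "\<theta>' \<in> {0,1}" using ts(2) by (auto simp: ind_def)
    then consider "\<theta>' = 1" | "\<theta>' = 0" by auto
    then show "1 \<le> Q W \<phi> i \<theta>' \<theta>' \<and> \<theta>' = (LEAST x. 0 \<le> x \<and> 1 \<le> Q W \<phi> i \<theta>' x)"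
    proof cases
      case 1
      have "C = 0" unfolding C_def
      proof (rule exp_const_supp)
        fix z assume "z \<in> set_pmf (cond_pmf (joint \<phi>) A)"
        then have z: "z \<in> set_pmf (joint \<phi>)" "z \<in> A" using ne by auto
        obtain t s where zts: "z = (t,s)" by (cases z)
        with z suppJ obtain S where S: "S \<in> set_pmf D" "s = ind S" by blast
        have "t i \<in> S" using z zts S 1 by (auto simp: A_def ind_def split: if_splits)
        then have zero: "\<forall>v'\<in>UNIV - {t i}. W (t i) v' * s v' = 0"
          using Dind S by (auto simp: indep_def ind_def)
        show "g z = 0" unfolding g_def zts fst_conv snd_conv using zero by (rule sum.neutral)
      qed
      then have Qy: "\<And>y. Q W \<phi> i \<theta>' y = y" using Qeq by simp
      have L: "(LEAST x::real. 0 \<le> x \<and> 1 \<le> x) = 1" by (rule Least_equality) auto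
      show ?thesis unfolding Qy using 1 L by simp
    next
      case 2
      define mA where "mA = measure_pmf.prob (joint \<phi>) A"
      have mApos: "mA > 0" using posA by (simp add: mA_def)
      have C_eq: "C = measure_pmf.expectation (joint \<phi>) (\<lambda>z. indicator A z * g z) / mA"
        unfolding C_def mA_def by (rule exp_cond[OF ne finJ])
      have mA_eq: "mA = measure_pmf.expectation (joint \<phi>) (\<lambda>z. indicator A z)"
        unfolding mA_def
        by (subst Bochner_Integration.integral_indicator) (auto simp: measure_pmf.emeasure_eq_measure)
      have key: "measure_pmf.expectation (joint \<phi>) (\<lambda>z. indicator A z * (g z - 1)) \<ge> 0"
      proof -
        define kk where "kk = (\<lambda>v (S::'v set). if ind S v = 0 then (\<Sum>v'\<in>UNIV - {v}. W v v' * ind S v') - 1 else 0)"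
        define H where "H = (\<lambda>v. (\<Sum>u\<in>UNIV. W v u * x u) - 1)"
        have kkS: "kk v S = (\<Sum>u\<in>UNIV. W v u * ind S u) - 1" if "S \<in> set_pmf D" for v S
        proof -
          have split: "(\<Sum>u\<in>UNIV. W v u * ind S u) = W v v * ind S v + (\<Sum>u\<in>UNIV - {v}. W v u * ind S u)"
            by (simp add: sum.remove)
          show ?thesis
          proof (cases "v \<in> S")
            case True
            have "\<forall>u\<in>UNIV - {v}. W v u * ind S u = 0" using Dind that True by (auto simp: indep_def ind_def)
            then have "(\<Sum>u\<in>UNIV - {v}. W v u * ind S u) = 0" by (rule sum.neutral)
            then show ?thesis using True Wd split by (simp add: kk_def ind_def)
          next
            case False
            then show ?thesis using split by (simp add: kk_def ind_def)
          qed
        qed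
        have Hv: "(\<Sum>S\<in>UNIV. kk v S * pmf D S) = H v" for v
        proof -
          have "(\<Sum>S\<in>UNIV. kk v S * pmf D S) = (\<Sum>S\<in>UNIV. ((\<Sum>u\<in>UNIV. W v u * ind S u) - 1) * pmf D S)"
            by (intro sum.cong refl) (metis kkS mult_zero_right set_pmf_iff)
          also have "\<dots> = (\<Sum>S\<in>UNIV. \<Sum>u\<in>UNIV. W v u * (ind S u * pmf D S)) - (\<Sum>S\<in>UNIV. pmf D S)"
            by (simp add: left_diff_distrib sum_subtractf sum_distrib_right mult.assoc)
          also have "(\<Sum>S\<in>UNIV. \<Sum>u\<in>UNIV. W v u * (ind S u * pmf D S)) = (\<Sum>u\<in>UNIV. \<Sum>S\<in>UNIV. W v u * (ind S u * pmf D S))"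
            by (rule sum.swap)
          also have "\<dots> = (\<Sum>u\<in>UNIV. W v u * x u)"
            using marg by (simp add: sum_distrib_left[symmetric])
          also have "(\<Sum>S\<in>UNIV. pmf D S) = 1" by (rule sum_pmf_eq_1) auto
          finally show ?thesis by (simp add: H_def)
        qed
        have "measure_pmf.expectation (joint \<phi>) (\<lambda>z. indicator A z * (g z - 1))
             = measure_pmf.expectation (pair_pmf P D) (\<lambda>(t,S). kk (t i) S)"
        proof -
          have "(\<lambda>z. (\<lambda>z. indicator A z * (g z - 1)) ((\<lambda>(t,S). (t, ind S)) z)) = (\<lambda>(t,S). kk (t i) S)"
            using 2 by (auto simp: fun_eq_iff A_def g_def kk_def indicator_def)
          then show ?thesis unfolding jointeq2 integral_map_pmf by simp
        qed
        also have "\<dots> = (\<Sum>z\<in>UNIV. (case z of (t,S) \<Rightarrow> kk (t i) S) * pmf (pair_pmf P D) z)"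
          by (rule exp_sum) auto
        also have "\<dots> = (\<Sum>(t,S)\<in>UNIV\<times>UNIV. kk (t i) S * (pmf P t * pmf D S))"
          by (subst UNIV_Times_UNIV) (intro sum.cong; auto simp: pmf_pair split: prod.split)
        also have "\<dots> = (\<Sum>t\<in>UNIV. \<Sum>S\<in>UNIV. kk (t i) S * (pmf P t * pmf D S))"
          by (rule sum.cartesian_product[symmetric])
        also have "\<dots> = (\<Sum>t\<in>UNIV. pmf P t * H (t i))"
        proof (intro sum.cong refl)
          fix t
          have "(\<Sum>S\<in>UNIV. kk (t i) S * (pmf P t * pmf D S)) = pmf P t * (\<Sum>S\<in>UNIV. kk (t i) S * pmf D S)"
            by (simp add: sum_distrib_left mult.left_commute)
          then show "(\<Sum>S\<in>UNIV. kk (t i) S * (pmf P t * pmf D S)) = pmf P t * H (t i)" using Hv by simp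
        qed
        also have "\<dots> = (\<Sum>t\<in>UNIV. if bij t then H (t i) / card B else 0)"
          by (intro sum.cong) (auto simp: pmfP B_def indicator_def)
        also have "\<dots> = (\<Sum>t\<in>B. H (t i) / card B)"
          using sum.inter_filter[of UNIV "\<lambda>t. H (t i) / card B" bij] by (simp add: B_def)
        also have "\<dots> = (\<Sum>t\<in>B. H (t i)) / card B" by (simp add: sum_divide_distrib)
        finally have eq: "measure_pmf.expectation (joint \<phi>) (\<lambda>z. indicator A z * (g z - 1)) = (\<Sum>t\<in>B. H (t i)) / card B" .
        have "(\<Sum>v\<in>UNIV. H v) \<ge> 0" using bal by (simp add: H_def sum_subtractf)
        then have "(\<Sum>t\<in>B. H (t i)) \<ge> 0" unfolding B_def by (rule sum_bij_uniform)
        then show ?thesis unfolding eq by simp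
      qed
      have "measure_pmf.expectation (joint \<phi>) (\<lambda>z. indicator A z * (g z - 1)) =
            measure_pmf.expectation (joint \<phi>) (\<lambda>z. indicator A z * g z) - mA"
      proof -
        have "(\<lambda>z. indicator A z * (g z - 1)) = (\<lambda>z. indicator A z * g z - indicator A z)"
          by (auto simp: fun_eq_iff right_diff_distrib)
        then show ?thesis unfolding mA_eq
          by (simp only:) (rule Bochner_Integration.integral_diff; use finJ in \<open>auto intro: integrable_measure_pmf_finite\<close>)
      qed
      then have "measure_pmf.expectation (joint \<phi>) (\<lambda>z. indicator A z * g z) \<ge> mA" using key by simp
      then have C1: "C \<ge> 1" using mApos by (simp add: C_eq)
      show ?thesis unfolding Qeq least_eq using 2 C1 by simp
    qed
  qed
  show ?thesis using sig pers costeq by blast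
qed

lemma exists_stable:
  fixes W :: "'v::finite \<Rightarrow> 'v \<Rightarrow> real"
  assumes uw: "unit_weight W"
  shows "\<exists>\<theta>. stable W \<theta>"
proof -
  have W01: "\<forall>u v. W u v \<in> {0,1}" and Wsym: "\<forall>u v. W u v = W v u" and Wd: "\<forall>v. W v v = 1"
    using uw by (auto simp: unit_weight_def)
  have Wnn: "\<forall>u v. 0 \<le> W u v" using W01 by (metis insert_iff order_refl singletonD zero_le_one)
  define I where "I = {S. indep W S}"
  have finI: "finite I" by simp
  have "{} \<in> I" by (simp add: I_def indep_def)
  define k where "k = Max (card ` I)"
  have "k \<in> card ` I" unfolding k_def using finI \<open>{} \<in> I\<close> by (intro Max_in) auto
  then obtain S where S: "S \<in> I" "card S = k" by auto
  have Smax: "card S' \<le> card S" if "S' \<in> I" for S'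
    using S finI that unfolding k_def by (simp add: Max_ge)
  have maxl: "\<exists>u\<in>S. W v u = 1" if "v \<notin> S" for v
  proof (rule ccontr)
    assume "\<not> (\<exists>u\<in>S. W v u = 1)"
    then have z: "\<forall>u\<in>S. W v u = 0" using W01 by auto
    then have "insert v S \<in> I" using S(1) Wsym by (auto simp: I_def indep_def)
    then have "card (insert v S) \<le> card S" by (rule Smax)
    then show False using that by simp
  qed
  define \<theta> where "\<theta> = (\<lambda>v. if v \<in> S then (1::real) else 0)"
  define c where "c = (\<lambda>v. \<Sum>u\<in>UNIV - {v}. W v u * \<theta> u)"
  have full: "(\<Sum>u\<in>UNIV. W v u * \<theta> u) = W v v * \<theta> v + c v" for v
    unfolding c_def by (rule sum.remove) auto
  have cS: "c v = 0" if "v \<in> S" for v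
  proof -
    have "\<forall>u\<in>UNIV - {v}. W v u * \<theta> u = 0"
      using S(1) that by (auto simp: I_def indep_def \<theta>_def)
    then show ?thesis unfolding c_def by (rule sum.neutral)
  qed
  have cN: "c v \<ge> 1" if "v \<notin> S" for v
  proof -
    from maxl[OF that] obtain u where u: "u \<in> S" "W v u = 1" ..
    have "u \<noteq> v" using u(1) that by metis
    have "W v u * \<theta> u \<le> c v" unfolding c_def
      using \<open>u \<noteq> v\<close> Wnn by (intro member_le_sum) (auto simp: \<theta>_def)
    moreover have "W v u * \<theta> u = 1" using u by (simp add: \<theta>_def)
    ultimately show ?thesis by linarith
  qed
  have "stable W \<theta>"
    unfolding stable_def feasible_def
  proof (intro conjI allI)
    fix v
    show "\<theta> v \<ge> 0" by (simp add: \<theta>_def)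
    show "(\<Sum>u\<in>UNIV. W v u * \<theta> u) \<ge> 1"
      using full[of v] cS[of v] cN[of v] Wd by (cases "v \<in> S") (auto simp: \<theta>_def)
    show "\<theta> v = (LEAST x. x \<ge> 0 \<and> x + (\<Sum>u\<in>UNIV - {v}. W v u * \<theta> u) \<ge> 1)"
      unfolding least_eq using cS[of v] cN[of v] by (cases "v \<in> S") (auto simp: \<theta>_def c_def)
  qed
  then show ?thesis by blast
qed

theorem theorem1p3:
  fixes W :: "'v::finite \<Rightarrow> 'v \<Rightarrow> real"
  assumes "CARD('a::finite) = CARD('v)"
    and "unit_weight W"
    and "OPT W < OPT_stable W"
  shows "\<exists>(Sig::real set) (\<phi>::('a \<Rightarrow> 'v) \<Rightarrow> ('v \<Rightarrow> real) pmf).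
           signaling_scheme Sig \<phi> \<and> card Sig = 2 \<and> persuasive W \<phi> \<and> cost \<phi> < OPT_stable W"
proof -
  note card = assms(1) and uw = assms(2) and gap = assms(3)
  have W01: "\<forall>u v. W u v \<in> {0,1}" and Wsym: "\<forall>u v. W u v = W v u" and Wd: "\<forall>v. W v v = 1"
    using uw by (auto simp: unit_weight_def)
  have Wnn: "\<forall>u v. 0 \<le> W u v" using W01 by (metis insert_iff order_refl singletonD zero_le_one)
  define n where "n = real CARD('v)"
  have npos: "n > 0" by (simp add: n_def)
  define m where "m = OPT_stable W"
  define ST where "ST = {\<theta>. stable W \<theta>}"
  define FE where "FE = {\<theta>. feasible W \<theta>}"
  have l1nn: "l1norm \<theta> \<ge> 0" for \<theta> :: "'v \<Rightarrow> real" by (simp add: l1norm_def sum_nonneg)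
  have l1eq: "l1norm \<theta> = (\<Sum>v\<in>UNIV. \<theta> v)" if "\<forall>v. \<theta> v \<ge> 0" for \<theta> :: "'v \<Rightarrow> real"
    using that by (simp add: l1norm_def)
  obtain \<theta>s where "stable W \<theta>s" using exists_stable[OF uw] by blast
  then have STne: "l1norm ` ST \<noteq> {}" by (auto simp: ST_def)
  have bddST: "bdd_below (l1norm ` ST)" using l1nn by (intro bdd_belowI[of _ 0]) auto
  have one_feas: "feasible W (\<lambda>_. 1)"
    unfolding feasible_def
  proof (intro conjI allI)
    fix v
    show "(0::real) \<le> 1" by simp
    have "W v v * 1 \<le> (\<Sum>u\<in>UNIV. W v u * 1)" using Wnn by (intro member_le_sum) auto
    then show "(\<Sum>u\<in>UNIV. W v u * 1) \<ge> 1" using Wd by simp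
  qed
  have FEne: "l1norm ` FE \<noteq> {}" using one_feas by (auto simp: FE_def)
  have "Inf (l1norm ` FE) < m" using gap by (simp add: OPT_def FE_def m_def)
  then obtain T0 where "T0 \<in> l1norm ` FE" "T0 < m" using cInf_lessD[OF FEne] by blast
  then obtain \<theta>0 where f0: "feasible W \<theta>0" and T0: "T0 = l1norm \<theta>0" "T0 < m" by (auto simp: FE_def)
  have nn0: "\<forall>v. \<theta>0 v \<ge> 0" and cov0: "\<forall>v. (\<Sum>u\<in>UNIV. W v u * \<theta>0 u) \<ge> 1"
    using f0 by (auto simp: feasible_def)
  have T0sum: "T0 = (\<Sum>v\<in>UNIV. \<theta>0 v)" using T0(1) l1eq[OF nn0] by simp
  have le0: "\<theta>0 v \<le> T0" for v unfolding T0sum using nn0 by (intro member_le_sum) auto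
  have T0pos: "T0 > 0"
  proof (rule ccontr)
    assume a: "\<not> T0 > 0"
    have z: "\<theta>0 u = 0" for u using le0[of u] spec[OF nn0, of u] a by linarith
    obtain v :: 'v where True by simp
    have "(\<Sum>u\<in>UNIV. W v u * \<theta>0 u) = 0" using z by simp
    then show False using spec[OF cov0, of v] by linarith
  qed
  define \<delta> where "\<delta> = m - T0"
  have \<delta>pos: "\<delta> > 0" using T0 by (simp add: \<delta>_def)
  have mpos: "m > 0" using T0 T0pos by simp
  have dT: "\<delta> / T0 > 0" using \<delta>pos T0pos by simp
  define target where "target = m * (n + \<delta> / T0) / n"
  have "m < target"
  proof -
    have "m * n < m * (n + \<delta> / T0)" using mpos dT by simp
    then show ?thesis using npos by (simp add: target_def field_simps)
  qed
  then have "Inf (l1norm ` ST) < target" by (simp add: m_def OPT_stable_def ST_def)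
  then obtain Tt where "Tt \<in> l1norm ` ST" "Tt < target" using cInf_lessD[OF STne] by blast
  then obtain \<theta> where st: "stable W \<theta>" and tt: "l1norm \<theta> < target" by (auto simp: ST_def)
  have mle: "m \<le> l1norm \<theta>" unfolding m_def OPT_stable_def
    using st bddST by (intro cInf_lower) (auto simp: ST_def)
  have fs: "feasible W \<theta>" using st unfolding stable_def by blast
  have nn: "\<forall>v. \<theta> v \<ge> 0" and cov: "\<forall>v. (\<Sum>u\<in>UNIV. W v u * \<theta> u) \<ge> 1"
    using fs unfolding feasible_def by blast+
  have lst: "\<forall>v. \<theta> v = (LEAST x. x \<ge> 0 \<and> x + (\<Sum>u\<in>UNIV-{v}. W v u * \<theta> u) \<ge> 1)"
    using st unfolding stable_def by blast
  define T where "T = (\<Sum>v\<in>UNIV. \<theta> v)"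
  have Tl1: "l1norm \<theta> = T" using l1eq[OF nn] by (simp add: T_def)
  define R where "R = (\<Sum>v\<in>UNIV. \<Sum>u\<in>UNIV. W v u * \<theta> u)"
  have ineq: "T \<le> T0 + T0 * (R - n)"
  proof -
    have "T = (\<Sum>u\<in>UNIV. \<theta> u * 1)" by (simp add: T_def)
    also have "\<dots> \<le> (\<Sum>u\<in>UNIV. \<theta> u * (\<Sum>v\<in>UNIV. W u v * \<theta>0 v))"
      using nn cov0 by (intro sum_mono mult_left_mono) auto
    also have "\<dots> = (\<Sum>u\<in>UNIV. \<Sum>v\<in>UNIV. \<theta>0 v * (W v u * \<theta> u))"
      using Wsym by (simp add: sum_distrib_left mult.commute mult.left_commute)
    also have "\<dots> = (\<Sum>v\<in>UNIV. \<Sum>u\<in>UNIV. \<theta>0 v * (W v u * \<theta> u))" by (rule sum.swap)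
    also have "\<dots> = (\<Sum>v\<in>UNIV. \<theta>0 v * (\<Sum>u\<in>UNIV. W v u * \<theta> u))" by (simp add: sum_distrib_left)
    also have "\<dots> \<le> (\<Sum>v\<in>UNIV. \<theta>0 v + T0 * ((\<Sum>u\<in>UNIV. W v u * \<theta> u) - 1))"
    proof (intro sum_mono)
      fix v
      have a: "(\<Sum>u\<in>UNIV. W v u * \<theta> u) - 1 \<ge> 0" using spec[OF cov, of v] by simp
      have "\<theta>0 v * ((\<Sum>u\<in>UNIV. W v u * \<theta> u) - 1) \<le> T0 * ((\<Sum>u\<in>UNIV. W v u * \<theta> u) - 1)"
        using le0[of v] a by (rule mult_right_mono)
      then show "\<theta>0 v * (\<Sum>u\<in>UNIV. W v u * \<theta> u) \<le> \<theta>0 v + T0 * ((\<Sum>u\<in>UNIV. W v u * \<theta> u) - 1)"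
        by (simp add: algebra_simps)
    qed
    also have "\<dots> = T0 + T0 * (R - n)"
      by (simp add: sum.distrib sum_distrib_left[symmetric] sum_subtractf T0sum R_def n_def)
    finally show ?thesis .
  qed
  have Rge: "R \<ge> n + \<delta> / T0"
  proof -
    have "m \<le> T0 + T0 * (R - n)" using mle Tl1 ineq by simp
    then have "\<delta> \<le> T0 * (R - n)" by (simp add: \<delta>_def)
    then have "\<delta> / T0 \<le> R - n" using T0pos by (simp add: field_simps)
    then show ?thesis by simp
  qed
  have nR: "n \<le> R" using Rge dT by linarith
  have Rpos: "R > 0" using nR npos by linarith
  define lam where "lam = n / R"
  have lam0: "0 < lam" using npos Rpos by (simp add: lam_def)
  have lam1: "lam \<le> 1" using nR Rpos by (simp add: lam_def)
  define x where "x = (\<lambda>v. lam * \<theta> v)"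
  have xnn: "\<forall>v. x v \<ge> 0" using nn lam0 by (simp add: x_def)
  have loc: "\<forall>v. x v > 0 \<longrightarrow> x v + (\<Sum>u\<in>UNIV-{v}. W v u * x u) \<le> 1"
  proof (intro allI impI)
    fix v assume "x v > 0"
    then have tp: "\<theta> v > 0" using lam0 by (simp add: x_def zero_less_mult_iff)
    define cc where "cc = (\<Sum>u\<in>UNIV-{v}. W v u * \<theta> u)"
    have "\<theta> v = (LEAST x. x \<ge> 0 \<and> x + cc \<ge> 1)" unfolding cc_def by (rule spec[OF lst])
    then have tm: "\<theta> v = max 0 (1 - cc)" by (simp only: least_eq)
    have s1: "\<theta> v + cc = 1"
    proof (cases "1 - cc \<le> 0")
      case True
      then have "\<theta> v = 0" using tm by (simp only: max_absorb1)
      then show ?thesis using tp by simp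
    next
      case False
      then have "\<theta> v = 1 - cc" using tm by (simp only: max_absorb2 not_le less_imp_le)
      then show ?thesis by simp
    qed
    have s2: "(\<Sum>u\<in>UNIV-{v}. W v u * x u) = lam * cc"
      by (simp add: x_def cc_def sum_distrib_left mult.left_commute)
    have "x v + (\<Sum>u\<in>UNIV-{v}. W v u * x u) = lam * (\<theta> v + cc)"
      unfolding s2 by (simp add: x_def algebra_simps)
    also have "\<dots> = lam" by (simp only: s1 mult_1_right)
    finally show "x v + (\<Sum>u\<in>UNIV-{v}. W v u * x u) \<le> 1" using lam1 by simp
  qed
  obtain D where D: "\<forall>S\<in>set_pmf D. S \<subseteq> UNIV \<and> indep W S"
    "\<forall>v\<in>UNIV. measure_pmf.prob D {S. v \<in> S} = x v"
    using stab_pmf[OF W01 Wsym xnn loc finite_class.finite_UNIV] by blast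
  have Dind: "\<forall>S\<in>set_pmf D. indep W S" using D(1) by blast
  have Dm: "\<forall>v. measure_pmf.prob D {S. v \<in> S} = x v" using D(2) by blast
  have bal: "(\<Sum>v\<in>UNIV. \<Sum>u\<in>UNIV. W v u * x u) \<ge> real CARD('v)"
  proof -
    have "(\<Sum>v\<in>UNIV. \<Sum>u\<in>UNIV. W v u * x u) = lam * R"
      by (simp add: x_def R_def sum_distrib_left mult.left_commute)
    also have "\<dots> = n" using Rpos by (simp add: lam_def)
    finally show ?thesis by (simp add: n_def)
  qed
  obtain \<phi> :: "('a \<Rightarrow> 'v) \<Rightarrow> ('v \<Rightarrow> real) pmf" where
    \<phi>: "signaling_scheme {0,1} \<phi>" "persuasive W \<phi>" "cost \<phi> = (\<Sum>v\<in>UNIV. x v)"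
    using scheme[OF card uw Dind Dm bal] by blast
  have "cost \<phi> = lam * T" using \<phi>(3) by (simp add: x_def T_def sum_distrib_left)
  also have "\<dots> < m"
  proof -
    have "T < target" using tt Tl1 by simp
    then have "n * T < m * (n + \<delta> / T0)" using npos by (simp add: target_def field_simps)
    also have "\<dots> \<le> m * R" using Rge mpos by (intro mult_left_mono) auto
    finally have "n * T < m * R" .
    then show ?thesis using Rpos by (simp add: lam_def field_simps)
  qed
  finally have "cost \<phi> < OPT_stable W" by (simp add: m_def)
  moreover have "card {0::real, 1} = 2" by simp
  ultimately show ?thesis using \<phi> by blast
qed

end
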